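(* Let $X$ be a real Banach space and let $C\subseteq B_{X^*}$ be a nonempty convex $w^*$-compact set such that every convex combination of slices of $C$ has diameter $2$. Then $K=\mathrm{co}(C\cup(-C))$ is a $w^*$-compact convex subset of $B_{X^*}$ such that every convex combination of slices of $K$ has diameter $2$.
   Context: For a bounded set $A$ in a Banach space $Z$ (here $Z=X^*$), a slice of $A$ is a nonempty set of the form $S(A,\phi,\alpha)=\{a\in A: \phi(a)>\sup_A\phi-\alpha\}$ with $\phi\in Z^*\setminus\{0\}$ and $\alpha>0$. A convex combination of slices of $A$ is a Minkowski sum $\sum_{i=1}^n\lambda_iS_i=\{\sum_i\lambda_is_i: s_i\in S_i\}$ where $S_i$ are slices of $A$, $\lambda_i>0$ and $\sum_i\lambda_i=1$. $\mathrm{co}$ denotes the convex hull. *)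

theory Defs
  imports "HOL-Analysis.Analysis"
begin

text \<open>The dual space X* of a real Banach space X is modelled as the type
  of bounded linear functionals 'a \<Rightarrow>L real.\<close>

definition weak_star_topology :: "('a::real_normed_vector \<Rightarrow>\<^sub>L real) topology" where
  "weak_star_topology =
     topology_generated_by {{f. blinfun_apply f x \<in> U} | x U. open (U :: real set)}"

definition slice :: "'b::real_normed_vector set \<Rightarrow> ('b \<Rightarrow>\<^sub>L real) \<Rightarrow> real \<Rightarrow> 'b set" where
  "slice A \<phi> \<alpha> = {a \<in> A. blinfun_apply \<phi> a > (SUP b\<in>A. blinfun_apply \<phi> b) - \<alpha>}"

definition is_slice :: "'b::real_normed_vector set \<Rightarrow> 'b set \<Rightarrow> bool" where
  "is_slice A S \<longleftrightarrow>
     (\<exists>\<phi> \<alpha>. \<phi> \<noteq> 0 \<and> \<alpha> > 0 \<and> S = slice A \<phi> \<alpha> \<and> S \<noteq> {})"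

definition conv_comb_slices :: "'b::real_normed_vector set \<Rightarrow> 'b set set" where
  "conv_comb_slices A =
     {D. \<exists>n::nat. \<exists>c S. n \<ge> 1 \<and> (\<forall>i<n. c i > 0 \<and> is_slice A (S i)) \<and>
          (\<Sum>i<n. c i) = 1 \<and>
          D = {(\<Sum>i<n. c i *\<^sub>R s i) | s. \<forall>i<n. s i \<in> S i}}"

end

theory Submission
  imports Defs
begin


lemma convex_hull_union_two_gen:
  fixes S T :: "'m::real_vector set"
  assumes "convex S" "S \<noteq> {}" "convex T" "T \<noteq> {}"
  shows "convex hull (S \<union> T) =
    {u *\<^sub>R s + v *\<^sub>R t | u v s t. u \<ge> 0 \<and> v \<ge> 0 \<and> u + v = 1 \<and> s \<in> S \<and> t \<in> T}"
  (is "?lhs = ?rhs")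
proof
  define I :: "nat set" where "I = {1, 2}"
  define s where "s i = (if i = (1::nat) then S else T)" for i
  have "\<Union>(s ` I) = S \<union> T"
    using s_def I_def by auto
  then have "convex hull (\<Union>(s ` I)) = convex hull (S \<union> T)"
    by auto
  moreover have "convex hull \<Union>(s ` I) =
    {\<Sum> i\<in>I. c i *\<^sub>R sa i | c sa. (\<forall>i\<in>I. 0 \<le> c i) \<and> sum c I = 1 \<and> (\<forall>i\<in>I. sa i \<in> s i)}"
      using assms s_def I_def
      by (subst convex_hull_finite_union) auto
  moreover have
    "{\<Sum>i\<in>I. c i *\<^sub>R sa i | c sa. (\<forall>i\<in>I. 0 \<le> c i) \<and> sum c I = 1 \<and> (\<forall>i\<in>I. sa i \<in> s i)} \<le> ?rhs"
    using s_def I_def by auto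
  ultimately show "?lhs \<subseteq> ?rhs" by auto
  {
    fix x
    assume "x \<in> ?rhs"
    then obtain u v s t where *: "x = u *\<^sub>R s + v *\<^sub>R t \<and> u \<ge> 0 \<and> v \<ge> 0 \<and> u + v = 1 \<and> s \<in> S \<and> t \<in> T"
      by auto
    then have "x \<in> convex hull {s, t}"
      using convex_hull_2[of s t] by auto
    then have "x \<in> convex hull (S \<union> T)"
      using * hull_mono[of "{s, t}" "S \<union> T"] by auto
  }
  then show "?lhs \<supseteq> ?rhs" by blast
qed

lemma ws_topspace: "topspace (weak_star_topology :: ('a::real_normed_vector \<Rightarrow>\<^sub>L real) topology) = UNIV"
  unfolding weak_star_topology_def topology_generated_by_topspace
  by (auto intro!: exI[of _ 0] exI[of _ UNIV])

lemma eval_cont: "continuous_map weak_star_topology euclideanreal (\<lambda>f::'a::real_normed_vector \<Rightarrow>\<^sub>L real. blinfun_apply f x)"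
  unfolding continuous_map_def ws_topspace
proof (intro conjI allI impI)
  fix U :: "real set" assume "openin euclideanreal U"
  then have "open U" by simp
  then show "openin weak_star_topology {f \<in> UNIV. blinfun_apply f x \<in> U}"
    unfolding weak_star_topology_def
    by (intro topology_generated_by_Basis) auto
qed auto

lemma hull_compact:
  fixes C :: "('a::real_normed_vector \<Rightarrow>\<^sub>L real) set"
  assumes ne: "C \<noteq> {}" and cv: "convex C" and cp: "compactin weak_star_topology C"
  shows "compactin weak_star_topology (convex hull (C \<union> uminus ` C))"
proof -
  define P where "P = prod_topology (weak_star_topology :: ('a \<Rightarrow>\<^sub>L real) topology) (prod_topology (weak_star_topology :: ('a \<Rightarrow>\<^sub>L real) topology) euclideanreal)"
  define g where "g = (\<lambda>p::('a \<Rightarrow>\<^sub>L real) \<times> ('a \<Rightarrow>\<^sub>L real) \<times> real. snd (snd p) *\<^sub>R fst p - (1 - snd (snd p)) *\<^sub>R fst (snd p))"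
  have cpt: "compactin P (C \<times> C \<times> {0..1})"
    unfolding P_def using cp by (simp add: compactin_Times)
  have ev: "continuous_map P euclideanreal (\<lambda>p. blinfun_apply (g p) x)" for x
  proof -
    have e1: "continuous_map P euclideanreal (\<lambda>p. blinfun_apply (fst p) x)"
      unfolding P_def using continuous_map_compose[OF continuous_map_fst eval_cont]
      by (simp add: o_def)
    have e2: "continuous_map P euclideanreal (\<lambda>p. blinfun_apply (fst (snd p)) x)"
      unfolding P_def using continuous_map_compose[OF continuous_map_compose[OF continuous_map_snd continuous_map_fst] eval_cont]
      by (simp add: o_def)
    have e3: "continuous_map P euclideanreal (\<lambda>p. snd (snd p))"
      unfolding P_def using continuous_map_compose[OF continuous_map_snd continuous_map_snd]
      by (simp add: o_def)
    have "continuous_map P euclideanreal (\<lambda>p. snd (snd p) * blinfun_apply (fst p) x - (1 - snd (snd p)) * blinfun_apply (fst (snd p)) x)"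
      by (intro continuous_map_diff continuous_map_real_mult e1 e2 e3 continuous_map_const[THEN iffD2]) auto
    then show ?thesis unfolding g_def by (simp add: blinfun.diff_left blinfun.scaleR_left)
  qed
  have gc: "continuous_map P weak_star_topology g"
    unfolding weak_star_topology_def
  proof (rule continuous_on_generated_topo)
    fix U :: "('a \<Rightarrow>\<^sub>L real) set"
    assume "U \<in> {{f. blinfun_apply f x \<in> U} |x U. open (U :: real set)}"
    then obtain x V where U: "U = {f. blinfun_apply f x \<in> V}" "open V" by blast
    have "g -` U \<inter> topspace P = {p \<in> topspace P. blinfun_apply (g p) x \<in> V}"
      using U by auto
    then show "openin P (g -` U \<inter> topspace P)"
      using openin_continuous_map_preimage[OF ev] U by simp
  qed (auto intro!: exI[of _ 0] exI[of _ UNIV])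
  have "g ` (C \<times> C \<times> {0..1}) = convex hull (C \<union> uminus ` C)"
  proof -
    have "convex hull (C \<union> uminus ` C) = {u *\<^sub>R s + v *\<^sub>R t | u v s t. u \<ge> 0 \<and> v \<ge> 0 \<and> u + v = 1 \<and> s \<in> C \<and> t \<in> uminus ` C}"
      using ne cv by (intro convex_hull_union_two_gen convex_negations) auto
    also have "\<dots> = g ` (C \<times> C \<times> {0..1})"
    proof (intro set_eqI iffI)
      fix z assume "z \<in> {u *\<^sub>R s + v *\<^sub>R t | u v s t. u \<ge> 0 \<and> v \<ge> 0 \<and> u + v = 1 \<and> s \<in> C \<and> t \<in> uminus ` C}"
      then obtain u v s t where "z = u *\<^sub>R s + v *\<^sub>R (- t)" "u \<ge> 0" "v \<ge> 0" "u + v = 1" "s \<in> C" "t \<in> C" by blast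
      then show "z \<in> g ` (C \<times> C \<times> {0..1})"
        unfolding g_def by (intro image_eqI[of _ _ "(s, t, u)"]) auto
    next
      fix z assume "z \<in> g ` (C \<times> C \<times> {0..1})"
      then obtain s t u where "z = u *\<^sub>R s - (1 - u) *\<^sub>R t" "u \<in> {0..1}" "s \<in> C" "t \<in> C"
        unfolding g_def by auto
      then show "z \<in> {u *\<^sub>R s + v *\<^sub>R t | u v s t. u \<ge> 0 \<and> v \<ge> 0 \<and> u + v = 1 \<and> s \<in> C \<and> t \<in> uminus ` C}"
        by (intro CollectI exI[of _ u] exI[of _ "1-u"] exI[of _ s] exI[of _ "-t"]) auto
    qed
    finally show ?thesis by simp
  qed
  then show ?thesis using image_compactin[OF cpt gc] by simp
qed


lemma slice_helper:
  fixes C K :: "'b::real_normed_vector set" and \<phi> \<psi> :: "'b \<Rightarrow>\<^sub>L real"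
  assumes ne: "C \<noteq> {}" and bdd: "bdd_above (\<psi> ` C)" and e: "e = 1 \<or> e = -1"
    and psi: "\<And>x. blinfun_apply \<psi> x = e * blinfun_apply \<phi> x"
    and Kb: "\<forall>k\<in>K. blinfun_apply \<phi> k \<le> (SUP c\<in>C. blinfun_apply \<psi> c)"
    and CK: "\<forall>c\<in>C. e *\<^sub>R c \<in> K" and a: "\<alpha> > 0" and phi0: "\<phi> \<noteq> 0"
  shows "is_slice C (slice C \<psi> \<alpha>) \<and> (\<forall>s\<in>slice C \<psi> \<alpha>. e *\<^sub>R s \<in> slice K \<phi> \<alpha>)"
proof -
  define m where "m = (SUP c\<in>C. blinfun_apply \<psi> c)"
  have Kne: "K \<noteq> {}" using ne CK by blast
  have bK: "bdd_above (\<phi> ` K)" using Kb unfolding m_def bdd_above_def by blast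
  have phis: "blinfun_apply \<phi> (e *\<^sub>R c) = blinfun_apply \<psi> c" for c
    using psi by (simp add: blinfun.scaleR_right)
  have M1: "(SUP k\<in>K. blinfun_apply \<phi> k) \<le> m"
    using Kb Kne unfolding m_def by (intro cSUP_least) auto
  have M2: "m \<le> (SUP k\<in>K. blinfun_apply \<phi> k)"
    unfolding m_def
  proof (rule cSUP_least[OF ne])
    fix c assume "c \<in> C"
    then have "blinfun_apply \<phi> (e *\<^sub>R c) \<le> (SUP k\<in>K. blinfun_apply \<phi> k)"
      using CK bK by (intro cSUP_upper) auto
    then show "blinfun_apply \<psi> c \<le> (SUP k\<in>K. blinfun_apply \<phi> k)" using phis by simp
  qed
  have M: "(SUP k\<in>K. blinfun_apply \<phi> k) = m" using M1 M2 by simp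
  have psi0: "\<psi> \<noteq> 0"
  proof
    assume "\<psi> = 0"
    then have "blinfun_apply \<phi> x = 0" for x using psi[of x] e by auto
    then show False using phi0 by (metis blinfun_eqI zero_blinfun.rep_eq)
  qed
  obtain c where c: "c \<in> C" "m - \<alpha> < blinfun_apply \<psi> c"
    using less_cSUP_iff[OF ne bdd, of "m - \<alpha>"] a unfolding m_def by auto
  have "slice C \<psi> \<alpha> \<noteq> {}" using c unfolding slice_def m_def by auto
  then have "is_slice C (slice C \<psi> \<alpha>)" unfolding is_slice_def using psi0 a by blast
  moreover have "\<forall>s\<in>slice C \<psi> \<alpha>. e *\<^sub>R s \<in> slice K \<phi> \<alpha>"
    using CK phis M unfolding slice_def m_def by auto
  ultimately show ?thesis by blast
qed

lemma bdd_ball: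
  fixes A :: "'b::real_normed_vector set" and \<phi> :: "'b \<Rightarrow>\<^sub>L real"
  assumes "A \<subseteq> cball 0 1"
  shows "bdd_above ((\<lambda>x. blinfun_apply \<phi> x) ` A)"
proof -
  have "blinfun_apply \<phi> x \<le> norm \<phi>" if "x \<in> A" for x
  proof -
    have "blinfun_apply \<phi> x \<le> norm (blinfun_apply \<phi> x)" by simp
    also have "\<dots> \<le> norm \<phi> * norm x" by (rule norm_blinfun)
    also have "\<dots> \<le> norm \<phi> * 1" using assms that by (intro mult_left_mono) auto
    finally show ?thesis by simp
  qed
  then show ?thesis unfolding bdd_above_def by blast
qed

lemma slice_K:
  fixes C :: "'b::real_normed_vector set"
  assumes ne: "C \<noteq> {}" and sub: "C \<subseteq> cball 0 1" and sl: "is_slice (convex hull (C \<union> uminus ` C)) S"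
  shows "\<exists>S' e. is_slice C S' \<and> (e = 1 \<or> e = -1) \<and> (\<forall>s\<in>S'. e *\<^sub>R s \<in> S)"
proof -
  define K where "K = convex hull (C \<union> uminus ` C)"
  obtain \<phi> \<alpha> where pa: "\<phi> \<noteq> 0" "\<alpha> > 0" "S = slice K \<phi> \<alpha>"
    using sl unfolding is_slice_def K_def by blast
  define m1 where "m1 = (SUP c\<in>C. blinfun_apply \<phi> c)"
  define m2 where "m2 = (SUP c\<in>C. blinfun_apply (- \<phi>) c)"
  have b1: "bdd_above (blinfun_apply \<phi> ` C)" using bdd_ball[OF sub] .
  have b2: "bdd_above (blinfun_apply (-\<phi>) ` C)" using bdd_ball[OF sub] .
  have CK1: "\<forall>c\<in>C. (1::real) *\<^sub>R c \<in> K" unfolding K_def by (simp add: hull_inc)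
  have CK2: "\<forall>c\<in>C. (-1::real) *\<^sub>R c \<in> K" unfolding K_def by (simp add: hull_inc)
  have Kb: "\<forall>k\<in>K. blinfun_apply \<phi> k \<le> max m1 m2"
  proof -
    have cvx: "convex {x. blinfun_apply \<phi> x \<le> max m1 m2}"
      unfolding convex_def
    proof (intro allI impI ballI, simp)
      fix x y :: 'b and u v :: real
      assume h: "blinfun_apply \<phi> x \<le> max m1 m2" "blinfun_apply \<phi> y \<le> max m1 m2" "0 \<le> u" "0 \<le> v" "u + v = 1"
      have "blinfun_apply \<phi> (u *\<^sub>R x + v *\<^sub>R y) = u * blinfun_apply \<phi> x + v * blinfun_apply \<phi> y"
        by (simp add: blinfun.add_right blinfun.scaleR_right)
      also have "\<dots> \<le> u * max m1 m2 + v * max m1 m2"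
        using h by (intro add_mono mult_left_mono) auto
      also have "\<dots> = max m1 m2" using h(5) by (metis distrib_right mult_1)
      finally show "blinfun_apply \<phi> (u *\<^sub>R x + v *\<^sub>R y) \<le> max m1 m2" .
    qed
    have "C \<union> uminus ` C \<subseteq> {x. blinfun_apply \<phi> x \<le> max m1 m2}"
    proof
      fix x assume "x \<in> C \<union> uminus ` C"
      then consider "x \<in> C" | c where "c \<in> C" "x = - c" by blast
      then show "x \<in> {x. blinfun_apply \<phi> x \<le> max m1 m2}"
      proof cases
        case 1
        then have "blinfun_apply \<phi> x \<le> m1" unfolding m1_def using b1 by (intro cSUP_upper) auto
        then show ?thesis by simp
      next
        case 2
        then have "blinfun_apply (-\<phi>) c \<le> m2" unfolding m2_def using b2 by (intro cSUP_upper) auto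
        then show ?thesis using 2 by (simp add: blinfun.minus_right uminus_blinfun.rep_eq)
      qed
    qed
    then have "K \<subseteq> {x. blinfun_apply \<phi> x \<le> max m1 m2}"
      unfolding K_def using cvx by (intro hull_minimal) auto
    then show ?thesis by blast
  qed
  show ?thesis
  proof (cases "m2 \<le> m1")
    case True
    have "is_slice C (slice C \<phi> \<alpha>) \<and> (\<forall>s\<in>slice C \<phi> \<alpha>. (1::real) *\<^sub>R s \<in> slice K \<phi> \<alpha>)"
      by (rule slice_helper[OF ne b1 _ _ _ CK1 pa(2) pa(1)]) (use Kb True max_absorb1[OF True] in \<open>auto simp: m1_def[symmetric]\<close>)
    then show ?thesis using pa(3) by blast
  next
    case False
    have m2': "m2 = (SUP x\<in>C. - blinfun_apply \<phi> x)" unfolding m2_def by (simp add: uminus_blinfun.rep_eq)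
    have "is_slice C (slice C (-\<phi>) \<alpha>) \<and> (\<forall>s\<in>slice C (-\<phi>) \<alpha>. (-1::real) *\<^sub>R s \<in> slice K \<phi> \<alpha>)"
      by (rule slice_helper[OF ne b2 _ _ _ CK2 pa(2) pa(1)]) (use Kb False max_absorb2[of m1 m2] m2' in \<open>auto simp: uminus_blinfun.rep_eq\<close>)
    then show ?thesis using pa(3) by blast
  qed
qed


lemma comb_ball:
  fixes s :: "nat \<Rightarrow> 'b::real_normed_vector"
  assumes "\<forall>i<n. c i > 0" "(\<Sum>i<n. c i) = 1" "\<forall>i<n. norm (s i) \<le> 1"
  shows "norm (\<Sum>i<n. c i *\<^sub>R s i) \<le> 1"
proof -
  have "norm (\<Sum>i<n. c i *\<^sub>R s i) \<le> (\<Sum>i<n. norm (c i *\<^sub>R s i))" by (rule norm_sum)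
  also have "\<dots> \<le> (\<Sum>i<n. c i)"
    using assms by (intro sum_mono) (auto intro: mult_left_le)
  finally show ?thesis using assms by simp
qed

lemma slice_sub: "slice A \<phi> \<alpha> \<subseteq> A" unfolding slice_def by auto

lemma is_slice_sub: "is_slice A S \<Longrightarrow> S \<subseteq> A" unfolding is_slice_def using slice_sub by blast

lemma diam_K:
  fixes C :: "'b::real_normed_vector set"
  assumes ne: "C \<noteq> {}" and sub: "C \<subseteq> cball 0 1"
    and dC: "\<forall>D \<in> conv_comb_slices C. diameter D = 2"
    and D: "D \<in> conv_comb_slices (convex hull (C \<union> uminus ` C))"
  shows "diameter D = 2"
proof -
  define K where "K = convex hull (C \<union> uminus ` C)"
  have Kb: "K \<subseteq> cball 0 1"
    unfolding K_def using sub by (intro hull_minimal) (auto simp: convex_cball)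
  have D2: "D \<in> conv_comb_slices K" using D K_def by simp
  obtain n :: nat and c :: "nat \<Rightarrow> real" and S where nc: "n \<ge> 1" "\<forall>i<n. c i > 0 \<and> is_slice K (S i)" "(\<Sum>i<n. c i) = 1"
    and Dd: "D = {(\<Sum>i<n. c i *\<^sub>R s i) | s. \<forall>i<n. s i \<in> S i}"
    using D2 unfolding conv_comb_slices_def mem_Collect_eq by blast
  have ex: "\<forall>i. \<exists>p. i < n \<longrightarrow> is_slice C (fst p) \<and> (snd p = 1 \<or> snd p = (-1::real)) \<and> (\<forall>s\<in>fst p. snd p *\<^sub>R s \<in> S i)"
  proof
    fix i
    show "\<exists>p. i < n \<longrightarrow> is_slice C (fst p) \<and> (snd p = 1 \<or> snd p = (-1::real)) \<and> (\<forall>s\<in>fst p. snd p *\<^sub>R s \<in> S i)"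
    proof (cases "i < n")
      case True
      then have "is_slice K (S i)" using nc(2) by blast
      then obtain S' e where "is_slice C S' \<and> (e = 1 \<or> e = -1) \<and> (\<forall>s\<in>S'. e *\<^sub>R s \<in> S i)"
        using slice_K[OF ne sub, of "S i"] unfolding K_def by blast
      then show ?thesis by (intro exI[of _ "(S', e)"]) auto
    qed auto
  qed
  obtain p where p0: "\<forall>i. i < n \<longrightarrow> is_slice C (fst (p i)) \<and> (snd (p i) = 1 \<or> snd (p i) = (-1::real)) \<and> (\<forall>s\<in>fst (p i). snd (p i) *\<^sub>R s \<in> S i)"
    using choice[OF ex] by blast
  have p: "is_slice C (fst (p i)) \<and> (snd (p i) = 1 \<or> snd (p i) = (-1::real)) \<and> (\<forall>s\<in>fst (p i). snd (p i) *\<^sub>R s \<in> S i)" if "i < n" for i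
    using p0 that by blast
  define S' where "S' i = fst (p i)" for i
  define e where "e i = snd (p i)" for i
  define D' where "D' = {(\<Sum>i<n. c i *\<^sub>R s i) | s. \<forall>i<n. s i \<in> S' i}"
  have D'in: "D' \<in> conv_comb_slices C"
    unfolding conv_comb_slices_def D'_def
  proof (intro CollectI exI[of _ n] exI[of _ c] exI[of _ S'] conjI allI impI)
    fix i assume "i < n" then show "0 < c i" "is_slice C (S' i)" using nc(2) p unfolding S'_def by auto
  qed (use nc in auto)
  then have dD': "diameter D' = 2" using dC by blast
  have D'b: "D' \<subseteq> cball 0 1"
  proof
    fix x assume "x \<in> D'"
    then obtain s where "x = (\<Sum>i<n. c i *\<^sub>R s i)" "\<forall>i<n. s i \<in> S' i" unfolding D'_def by blast
    moreover have "\<forall>i<n. norm (s i) \<le> 1"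
    proof (intro allI impI)
      fix i assume "i < n"
      then have "s i \<in> C" using calculation(2) p[of i] is_slice_sub unfolding S'_def by blast
      then show "norm (s i) \<le> 1" using sub by auto
    qed
    ultimately show "x \<in> cball 0 1" using comb_ball[of n c s] nc by auto
  qed
  have Db: "D \<subseteq> cball 0 1"
  proof
    fix x assume "x \<in> D"
    then obtain s where "x = (\<Sum>i<n. c i *\<^sub>R s i)" "\<forall>i<n. s i \<in> S i" unfolding Dd by blast
    moreover have "\<forall>i<n. norm (s i) \<le> 1"
    proof (intro allI impI)
      fix i assume "i < n"
      then have "s i \<in> K" using calculation(2) nc(2) is_slice_sub by blast
      then show "norm (s i) \<le> 1" using Kb by auto
    qed
    ultimately show "x \<in> cball 0 1" using comb_ball[of n c s] nc by auto
  qed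
  have le: "diameter D \<le> 2"
  proof (rule diameter_le)
    fix x y assume "x \<in> D" "y \<in> D"
    then have "norm x \<le> 1" "norm y \<le> 1" using Db by auto
    then show "norm (x - y) \<le> 2" using norm_triangle_ineq4[of x y] by linarith
  qed simp
  have ge: "diameter D \<ge> 2"
  proof (rule ccontr)
    assume "\<not> diameter D \<ge> 2"
    then have lt: "diameter D < diameter D'" using dD' by simp
    have "\<forall>i. \<exists>s. i < n \<longrightarrow> s \<in> S' i"
    proof
      fix i show "\<exists>s. i < n \<longrightarrow> s \<in> S' i"
      proof (cases "i < n")
        case True then have "S' i \<noteq> {}" using p[of i] unfolding is_slice_def S'_def by blast
        then show ?thesis by blast
      qed auto
    qed
    then obtain s0 where s0: "\<forall>i. i < n \<longrightarrow> s0 i \<in> S' i" using choice[OF \<open>\<forall>i. \<exists>s. i < n \<longrightarrow> s \<in> S' i\<close>] by blast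
    have "(\<Sum>i<n. c i *\<^sub>R s0 i) \<in> D'" unfolding D'_def using s0 by (intro CollectI exI[of _ s0]) auto
    then have D'ne: "D' \<noteq> {}" by blast
    have bdd: "bdd_above ((\<lambda>(x,y). dist x y) ` (D' \<times> D'))"
      unfolding bdd_above_def
    proof (intro exI[of _ 2] ballI)
      fix z assume "z \<in> (\<lambda>(x,y). dist x y) ` (D' \<times> D')"
      then obtain x y where "x \<in> D'" "y \<in> D'" "z = dist x y" by auto
      then have "norm x \<le> 1" "norm y \<le> 1" using D'b by auto
      then show "z \<le> 2" using \<open>z = dist x y\<close> norm_triangle_ineq4[of x y] by (simp add: dist_norm)
    qed
    have "diameter D' = (SUP (x,y)\<in>D'\<times>D'. dist x y)"
      using D'ne unfolding diameter_def by (simp only: if_False)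
    then have "diameter D < (SUP (x,y)\<in>D'\<times>D'. dist x y)" using lt by simp
    then have "\<exists>q\<in>D'\<times>D'. diameter D < (\<lambda>(x,y). dist x y) q"
      using less_cSUP_iff[OF _ bdd, of "diameter D"] D'ne by blast
    then obtain x y where xy: "x \<in> D'" "y \<in> D'" "diameter D < dist x y"
      by auto
    obtain s where s: "x = (\<Sum>i<n. c i *\<^sub>R s i)" "\<forall>i<n. s i \<in> S' i" using xy(1) unfolding D'_def by blast
    obtain t where t: "y = (\<Sum>i<n. c i *\<^sub>R t i)" "\<forall>i<n. t i \<in> S' i" using xy(2) unfolding D'_def by blast
    define u where "u i = (if e i = 1 then s i else t i)" for i
    define v where "v i = (if e i = 1 then t i else s i)" for i
    define x2 where "x2 = (\<Sum>i<n. c i *\<^sub>R (e i *\<^sub>R u i))"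
    define y2 where "y2 = (\<Sum>i<n. c i *\<^sub>R (e i *\<^sub>R v i))"
    have uS: "e i *\<^sub>R u i \<in> S i" "e i *\<^sub>R v i \<in> S i" if "i < n" for i
    proof -
      have "u i \<in> S' i" "v i \<in> S' i" using s(2) t(2) that unfolding u_def v_def by auto
      then show "e i *\<^sub>R u i \<in> S i" "e i *\<^sub>R v i \<in> S i" using p[OF that] unfolding S'_def e_def by blast+
    qed
    have x2D: "x2 \<in> D" unfolding Dd x2_def
      using uS by (intro CollectI exI[of _ "\<lambda>i. e i *\<^sub>R u i"]) auto
    have y2D: "y2 \<in> D" unfolding Dd y2_def
      using uS by (intro CollectI exI[of _ "\<lambda>i. e i *\<^sub>R v i"]) auto
    have "x2 - y2 = (\<Sum>i<n. c i *\<^sub>R (e i *\<^sub>R u i) - c i *\<^sub>R (e i *\<^sub>R v i))"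
      unfolding x2_def y2_def by (simp add: sum_subtractf)
    also have "\<dots> = (\<Sum>i<n. c i *\<^sub>R s i - c i *\<^sub>R t i)"
    proof (rule sum.cong[OF refl])
      fix i assume "i \<in> {..<n}"
      then have "e i = 1 \<or> e i = -1" using p[of i] unfolding e_def by auto
      then show "c i *\<^sub>R (e i *\<^sub>R u i) - c i *\<^sub>R (e i *\<^sub>R v i) = c i *\<^sub>R s i - c i *\<^sub>R t i"
        unfolding u_def v_def by (auto simp: algebra_simps)
    qed
    also have "\<dots> = x - y" using s t by (simp add: sum_subtractf)
    finally have "dist x2 y2 = dist x y" by (simp add: dist_norm)
    moreover have "dist x2 y2 \<le> diameter D"
      using bounded_subset[OF bounded_cball Db] x2D y2D by (rule diameter_bounded_bound)
    ultimately show False using xy(3) by simp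
  qed
  show ?thesis using le ge by simp
qed

theorem mainTheorem11:
  fixes C :: "('a::banach \<Rightarrow>\<^sub>L real) set"
  assumes "C \<noteq> {}"
    and "convex C"
    and "compactin weak_star_topology C"
    and "C \<subseteq> cball 0 1"
    and "\<forall>D \<in> conv_comb_slices C. diameter D = 2"
  shows "compactin weak_star_topology (convex hull (C \<union> uminus ` C))
       \<and> convex (convex hull (C \<union> uminus ` C))
       \<and> convex hull (C \<union> uminus ` C) \<subseteq> cball 0 1
       \<and> (\<forall>D \<in> conv_comb_slices (convex hull (C \<union> uminus ` C)). diameter D = 2)"
proof (intro conjI ballI)
  show "compactin weak_star_topology (convex hull (C \<union> uminus ` C))"
    using hull_compact assms(1-3) by blast
  show "convex (convex hull (C \<union> uminus ` C))" by simp
  show "convex hull (C \<union> uminus ` C) \<subseteq> cball 0 1"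
    using assms(4) by (intro hull_minimal) (auto simp: convex_cball)
  fix D assume "D \<in> conv_comb_slices (convex hull (C \<union> uminus ` C))"
  then show "diameter D = 2" using diam_K assms(1,4,5) by blast
qed

end
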